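(* Let $\beta\in(0,1]$ and consider $N_r\to\infty$ with $N_t=\beta N_r$ (integer), with $\mathbf H$ an $N_r\times N_t$ matrix with i.i.d. $\mathcal{CN}(0,1)$ entries. Then the high-SNR power offset of the MMSE achievable sum rate, $\mathcal L_\infty^{\rm mmse}=\log_2N_t-\log_2e\big(\sum_{\ell=1}^{N_r-N_t}\frac1\ell-\gamma\big)$, converges to $\log_2\big(\frac{\beta}{1-\beta}\big)$ (interpreted as $+\infty$ when $\beta=1$).
   Context: $\gamma$ is the Euler–Mascheroni constant. The high-SNR power offset is $\mathcal L_\infty^{\rm mmse}=\lim_{\mathrm{snr}\to\infty}(\log_2\mathrm{snr}-I^{\rm mmse}/N_t)$, where $I^{\rm mmse}(\mathrm{snr})=\sum_{i=1}^{N_t}E[\log_2(1+\gamma_i)]$ with $\gamma_i=1/\big[(\mathbf I_{N_t}+\frac{\mathrm{snr}}{N_t}\mathbf H^\dagger\mathbf H)^{-1}\big]_{i,i}-1$. *)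

theory Defs
  imports "HOL-Analysis.Analysis"
begin

definition mmse_power_offset :: "nat \<Rightarrow> nat \<Rightarrow> real" where
  "mmse_power_offset Nr Nt =
     log 2 (real Nt) - log 2 (exp 1) * (harm (Nr - Nt) - euler_mascheroni)"

end

theory Submission
  imports Defs
begin

lemma nat_at_top_from_real:
  fixes f :: "nat \<Rightarrow> nat"
  assumes "filterlim (\<lambda>k. real (f k)) at_top sequentially"
  shows "filterlim f at_top sequentially"
  unfolding filterlim_at_top
proof
  fix Z :: nat
  have "eventually (\<lambda>k. real Z \<le> real (f k)) sequentially"
    using assms unfolding filterlim_at_top by (rule allE)
  then show "eventually (\<lambda>k. Z \<le> f k) sequentially"
    by (rule eventually_mono) simp
qed

theorem corollary4:
  fixes \<beta> :: real and Nr Nt :: "nat \<Rightarrow> nat"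
  assumes "0 < \<beta>" and "\<beta> \<le> 1"
    and "filterlim Nr at_top sequentially"
    and "\<forall>k. real (Nt k) = \<beta> * real (Nr k)"
  shows "(\<beta> < 1 \<longrightarrow>
            ((\<lambda>k. mmse_power_offset (Nr k) (Nt k)) \<longlongrightarrow> log 2 (\<beta> / (1 - \<beta>))) sequentially)
       \<and> (\<beta> = 1 \<longrightarrow>
            filterlim (\<lambda>k. mmse_power_offset (Nr k) (Nt k)) at_top sequentially)"
proof (intro conjI impI)
  have Nrr: "filterlim (\<lambda>k. real (Nr k)) at_top sequentially"
    using filterlim_compose[OF filterlim_real_sequentially assms(3)] by simp
  have le: "Nt k \<le> Nr k" for k
  proof -
    have "real (Nt k) \<le> real (Nr k)" using assms(2,4) mult_right_mono[of \<beta> 1 "real (Nr k)"] by simp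
    thus ?thesis by simp
  qed
  have evpos: "eventually (\<lambda>k. 0 < Nr k) sequentially"
    using assms(3) by (simp add: filterlim_at_top) (metis (mono_tags) eventually_mono Suc_le_eq)
  {
    assume b1: "\<beta> < 1"
    define M where "M k = Nr k - Nt k" for k
    have rM: "real (M k) = (1 - \<beta>) * real (Nr k)" for k
      using le[of k] assms(4) by (simp add: M_def of_nat_diff algebra_simps)
    have "filterlim (\<lambda>k. (1 - \<beta>) * real (Nr k)) at_top sequentially"
      using filterlim_tendsto_pos_mult_at_top[OF tendsto_const _ Nrr, of "1-\<beta>"] b1 by simp
    hence Mlim: "filterlim M at_top sequentially"
      by (intro nat_at_top_from_real) (simp add: rM)
    have E: "(\<lambda>k. harm (M k) - ln (real (M k))) \<longlonglongrightarrow> euler_mascheroni"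
      using filterlim_compose[OF euler_mascheroni_LIMSEQ Mlim] by (simp add: o_def)
    hence E2: "(\<lambda>k. log 2 (\<beta> / (1 - \<beta>)) - (harm (M k) - ln (real (M k)) - euler_mascheroni) / ln 2)
        \<longlonglongrightarrow> log 2 (\<beta> / (1 - \<beta>)) - (euler_mascheroni - euler_mascheroni) / ln 2"
      by (intro tendsto_intros) auto
    have ev: "eventually (\<lambda>k. log 2 (\<beta> / (1 - \<beta>)) - (harm (M k) - ln (real (M k)) - euler_mascheroni) / ln 2
        = mmse_power_offset (Nr k) (Nt k)) sequentially"
      using evpos
    proof (rule eventually_mono)
      fix k assume p: "0 < Nr k"
      have pt: "0 < real (Nt k)" using p assms(1,4) by simp
      have pm: "0 < real (M k)" using p b1 rM by simp
      have "log 2 (\<beta> / (1 - \<beta>)) = log 2 (real (Nt k) / real (M k))"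
        using p b1 by (simp add: rM assms(4))
      also have "\<dots> = log 2 (real (Nt k)) - ln (real (M k)) / ln 2"
      proof -
        have "ln (real (Nt k) / real (M k)) = ln (real (Nt k)) - ln (real (M k))"
          using pt pm by (simp add: ln_div)
        thus ?thesis unfolding log_def by (simp add: diff_divide_distrib)
      qed
      finally show "log 2 (\<beta> / (1 - \<beta>)) - (harm (M k) - ln (real (M k)) - euler_mascheroni) / ln 2
        = mmse_power_offset (Nr k) (Nt k)"
        unfolding mmse_power_offset_def M_def[symmetric] by (simp add: log_def field_simps)
    qed
    have E3: "(\<lambda>k. log 2 (\<beta> / (1 - \<beta>)) - (harm (M k) - ln (real (M k)) - euler_mascheroni) / ln 2)
        \<longlonglongrightarrow> log 2 (\<beta> / (1 - \<beta>))" using E2 by simp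
    show "((\<lambda>k. mmse_power_offset (Nr k) (Nt k)) \<longlongrightarrow> log 2 (\<beta> / (1 - \<beta>))) sequentially"
      by (rule Lim_transform_eventually[OF E3 ev])
  }
  {
    assume b1: "\<beta> = 1"
    hence eq: "Nt k = Nr k" for k using assms(4) by simp
    have off: "mmse_power_offset (Nr k) (Nt k) = log 2 (real (Nr k)) + log 2 (exp 1) * euler_mascheroni" for k
      by (simp add: mmse_power_offset_def eq log_def harm_expand(1) field_simps)
    have LN: "filterlim (\<lambda>k. ln (real (Nr k))) at_top sequentially"
      using filterlim_compose[OF ln_at_top Nrr] by (simp add: o_def)
    have "filterlim (\<lambda>k. ln (real (Nr k)) * (1 / ln 2)) at_top sequentially"
      by (rule filterlim_at_top_mult_tendsto_pos[OF tendsto_const _ LN]) simp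
    hence L: "filterlim (\<lambda>k. log 2 (real (Nr k))) at_top sequentially"
      by (simp add: log_def)
    show "filterlim (\<lambda>k. mmse_power_offset (Nr k) (Nt k)) at_top sequentially"
      unfolding off using filterlim_tendsto_add_at_top[OF tendsto_const L, of "log 2 (exp 1) * euler_mascheroni"] by (simp add: add.commute)
  }
qed

end
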